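(* In any execution of the algorithm $\mathcal{A}$ described in the context, for any two processes $p_i$ and $p_j$, if $p_i$ writes a set $S_i$ to $Set[i]$ and $p_j$ writes a set $S_j$ to $Set[j]$, then $S_i\subseteq S_j$ or $S_j\subseteq S_i$.
   Context: Algorithm $\mathcal{A}$ (a safe agreement algorithm for processes $p_0,\dots,p_{m-1}$, each invoking $propose$ at most once). Shared single-writer registers, for $0\le i<m$, written only by $p_i$: $Val[i]$ (initially $\bot$), $Id[i]$ (initially $\bot$), $Set[i]$ (initially $\emptyset$). $propose(v)$ at $p_i$: write $Val[i]\gets v$; write $Id[i]\gets i$; repeat { read $Id[0],\dots,Id[m-1]$ in order into $collect1$; read $Id[0],\dots,Id[m-1]$ in order into $collect2$ } until $collect1=collect2$ componentwise; then write $Set[i]\gets\{j: collect1[j]\neq\bot\}$. $resolve()$ at $p_i$: read $Set[0],\dots,Set[m-1]$, let $C$ be the smallest non-empty set read; if for every $j\in C$ the value read from $Set[j]$ is non-empty and contains $C$, return $Val[\min C]$, else return $\bot$. Reads and writes of registers are atomic. *)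

theory Defs
  imports Main
begin

text \<open>Bottom is modelled by None.  Each process is a sequential state machine whose
  transitions are single atomic register operations (the invocation and the
  local decision of resolve are register-free steps).\<close>

datatype 'v lstate =
    Idle                                  \<comment> \<open>propose not yet invoked, no operation pending\<close>
  | PWVal 'v                              \<comment> \<open>propose(v) invoked, next: write Val[i]\<close>
  | PWId                                  \<comment> \<open>next: write Id[i]\<close>
  | PR1 "nat option list"                 \<comment> \<open>reading Id[.] into collect1 (partial)\<close>
  | PR2 "nat option list" "nat option list" \<comment> \<open>collect1 complete, reading collect2\<close>
  | PWSet "nat set"                       \<comment> \<open>next: write Set[i]\<close>
  | Done                                  \<comment> \<open>propose completed, no operation pending\<close>
  | RRd bool "nat set list"               \<comment> \<open>resolve: reading Set[.]; flag = propose completed before\<close>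
  | RDec bool "nat set list"              \<comment> \<open>resolve: all Set registers read, deciding\<close>
  | RRdVal bool nat                       \<comment> \<open>resolve: next read Val[k] and return it\<close>

datatype 'v act =
    InvPropose 'v | WrVal 'v | WrId | RdId nat "nat option" | WrSet "nat set"
  | InvResolve | RdSet nat "nat set" | RdVal nat "'v option" | RespResolve "'v option"

record 'v conf =
  ValR :: "nat \<Rightarrow> 'v option"
  IdR  :: "nat \<Rightarrow> nat option"
  SetR :: "nat \<Rightarrow> nat set"
  loc  :: "nat \<Rightarrow> 'v lstate"

definition init_conf :: "'v conf" where
  "init_conf = \<lparr>ValR = (\<lambda>_. None), IdR = (\<lambda>_. None), SetR = (\<lambda>_. {}), loc = (\<lambda>_. Idle)\<rparr>"

definition smallest_nonempty :: "nat set list \<Rightarrow> nat set" where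
  "smallest_nonempty ss = (SOME C. C \<in> set ss \<and> C \<noteq> {} \<and>
       (\<forall>D\<in>set ss. D \<noteq> {} \<longrightarrow> card C \<le> card D))"

definition resolve_ok :: "nat set list \<Rightarrow> bool" where
  "resolve_ok ss = ((\<exists>D\<in>set ss. D \<noteq> {}) \<and>
      (let C = smallest_nonempty ss in
         \<forall>j\<in>C. j < length ss \<and> ss ! j \<noteq> {} \<and> C \<subseteq> ss ! j))"

definition return_state :: "bool \<Rightarrow> 'v lstate" where
  "return_state b = (if b then Done else Idle)"

definition setloc :: "'v conf \<Rightarrow> nat \<Rightarrow> 'v lstate \<Rightarrow> 'v conf" where
  "setloc c i s = c\<lparr>loc := (loc c)(i := s)\<rparr>"

inductive step :: "nat \<Rightarrow> nat \<Rightarrow> 'v conf \<Rightarrow> 'v act \<Rightarrow> 'v conf \<Rightarrow> bool"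
  for m :: nat where
  inv_prop: "loc c i = Idle \<Longrightarrow> step m i c (InvPropose v) (setloc c i (PWVal v))"
| wr_val: "loc c i = PWVal v \<Longrightarrow>
     step m i c (WrVal v) (setloc (c\<lparr>ValR := (ValR c)(i := Some v)\<rparr>) i PWId)"
| wr_id: "loc c i = PWId \<Longrightarrow>
     step m i c WrId (setloc (c\<lparr>IdR := (IdR c)(i := Some i)\<rparr>) i (PR1 []))"
| rd1: "loc c i = PR1 c1 \<Longrightarrow> length c1 < m \<Longrightarrow> x = IdR c (length c1) \<Longrightarrow>
     step m i c (RdId (length c1) x)
       (setloc c i (if length (c1 @ [x]) = m then PR2 (c1 @ [x]) [] else PR1 (c1 @ [x])))"
| rd2: "loc c i = PR2 c1 c2 \<Longrightarrow> length c2 < m \<Longrightarrow> x = IdR c (length c2) \<Longrightarrow>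
     step m i c (RdId (length c2) x)
       (setloc c i (if length (c2 @ [x]) = m
                    then (if c1 = c2 @ [x] then PWSet {j. j < m \<and> c1 ! j \<noteq> None} else PR1 [])
                    else PR2 c1 (c2 @ [x])))"
| wr_set: "loc c i = PWSet S \<Longrightarrow>
     step m i c (WrSet S) (setloc (c\<lparr>SetR := (SetR c)(i := S)\<rparr>) i Done)"
| inv_res: "loc c i = Idle \<or> loc c i = Done \<Longrightarrow>
     step m i c InvResolve (setloc c i (RRd (loc c i = Done) []))"
| rd_set: "loc c i = RRd b ss \<Longrightarrow> length ss < m \<Longrightarrow> S = SetR c (length ss) \<Longrightarrow>
     step m i c (RdSet (length ss) S)
       (setloc c i (if length (ss @ [S]) = m then RDec b (ss @ [S]) else RRd b (ss @ [S])))"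
| dec_ok: "loc c i = RDec b ss \<Longrightarrow> resolve_ok ss \<Longrightarrow>
     step m i c (RdVal (Min (smallest_nonempty ss)) (ValR c (Min (smallest_nonempty ss))))
       (setloc c i (RRdVal b (Min (smallest_nonempty ss))))"
| dec_fail: "loc c i = RDec b ss \<Longrightarrow> \<not> resolve_ok ss \<Longrightarrow>
     step m i c (RespResolve None) (setloc c i (return_state b))"
| rd_val: "loc c i = RRdVal b k \<Longrightarrow>
     step m i c (RespResolve (ValR c k)) (setloc c i (return_state b))"

inductive execution :: "nat \<Rightarrow> (nat \<times> 'v act) list \<Rightarrow> 'v conf \<Rightarrow> bool" for m :: nat where
  exec_init: "execution m [] init_conf"
| exec_step: "execution m tr c \<Longrightarrow> i < m \<Longrightarrow> step m i c a c' \<Longrightarrow>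
     execution m (tr @ [(i, a)]) c'"

end

theory Submission
  imports Defs
begin

definition AS :: "nat \<Rightarrow> 'v conf \<Rightarrow> nat set" where
  "AS m c = {k. k < m \<and> IdR c k \<noteq> None}"

fun good :: "nat \<Rightarrow> nat set set \<Rightarrow> 'v conf \<Rightarrow> 'v lstate \<Rightarrow> bool" where
  "good m H c (PWSet S) = (S \<in> H)"
| "good m H c (PR1 c1) = (length c1 \<le> m \<and> (\<forall>k<length c1. c1!k \<noteq> None \<longrightarrow> IdR c k \<noteq> None))"
| "good m H c (PR2 c1 c2) = (length c1 = m \<and>
        (\<exists>X\<in>H. (\<forall>k<m. c1!k \<noteq> None \<longrightarrow> k\<in>X) \<and> (\<forall>k<length c2. c2!k = None \<longrightarrow> k\<notin>X)))"
| "good m H c _ = True"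

definition Inv :: "nat \<Rightarrow> nat set set \<Rightarrow> (nat \<times> 'v act) list \<Rightarrow> 'v conf \<Rightarrow> bool" where
  "Inv m H tr c =
   ((\<forall>X\<in>H. \<forall>Y\<in>H. X \<subseteq> Y \<or> Y \<subseteq> X) \<and> (\<forall>X\<in>H. X \<subseteq> AS m c) \<and>
    (\<forall>p S. (p, WrSet S) \<in> set tr \<longrightarrow> S \<in> H) \<and>
    (\<forall>p. good m H c (loc c p)))"

lemma good_mono:
  assumes "good m H c s" "H \<subseteq> H'" "\<forall>k. IdR c k \<noteq> None \<longrightarrow> IdR c' k \<noteq> None"
  shows "good m H' c' s"
  using assms by (cases s) auto

lemma Inv_frame:
  assumes I: "Inv m H tr c"
    and H': "H \<subseteq> H'" "\<forall>X\<in>H'. \<forall>Y\<in>H'. X \<subseteq> Y \<or> Y \<subseteq> X" "\<forall>X\<in>H'. X \<subseteq> AS m c'"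
    and mon: "\<forall>k. IdR c k \<noteq> None \<longrightarrow> IdR c' k \<noteq> None"
    and fr: "\<forall>p. p \<noteq> i \<longrightarrow> loc c' p = loc c p"
    and ws: "\<forall>S. a = WrSet S \<longrightarrow> S \<in> H'"
    and g: "good m H' c' (loc c' i)"
  shows "Inv m H' (tr@[(i,a)]) c'"
  unfolding Inv_def
proof (intro conjI)
  show "\<forall>p S. (p, WrSet S) \<in> set (tr @ [(i, a)]) \<longrightarrow> S \<in> H'"
    using I ws H'(1) unfolding Inv_def by auto
  show "\<forall>p. good m H' c' (loc c' p)"
  proof
    fix p show "good m H' c' (loc c' p)"
    proof (cases "p = i")
      case True then show ?thesis using g by simp
    next
      case False
      have "good m H c (loc c p)" using I unfolding Inv_def by blast
      then show ?thesis using good_mono[OF _ H'(1) mon] fr False by metis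
    qed
  qed
qed (use H' in auto)

lemma AS_mono: "\<forall>k. IdR c k \<noteq> None \<longrightarrow> IdR c' k \<noteq> None \<Longrightarrow> AS m c \<subseteq> AS m c'"
  by (auto simp: AS_def)

lemma inv_exec: "execution m tr c \<Longrightarrow> \<exists>H. Inv m H tr c"
proof (induction rule: execution.induct)
  case exec_init
  show ?case by (rule exI[of _ "{}"]) (simp add: Inv_def init_conf_def)
next
  case (exec_step tr c i a c')
  from exec_step.IH obtain H where I: "Inv m H tr c" by blast
  have ch: "\<forall>X\<in>H. \<forall>Y\<in>H. X \<subseteq> Y \<or> Y \<subseteq> X" and sub: "\<forall>X\<in>H. X \<subseteq> AS m c"
    and wsH: "\<forall>p S. (p, WrSet S) \<in> set tr \<longrightarrow> S \<in> H"
    and gd: "\<And>p. good m H c (loc c p)" using I unfolding Inv_def by blast+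
  have same: "Inv m H (tr@[(i,a)]) c'"
    if "IdR c' = IdR c" "\<forall>p. p \<noteq> i \<longrightarrow> loc c' p = loc c p"
       "\<forall>S. a = WrSet S \<longrightarrow> S \<in> H" "good m H c' (loc c' i)"
    using Inv_frame[OF I subset_refl ch _ _ that(2,3,4)] sub that(1)
    by (simp add: AS_def)
  from exec_step.hyps(3) show ?case
  proof cases
    case (inv_prop v)
    then show ?thesis using same by (auto simp: setloc_def)
  next
    case (wr_val v)
    then show ?thesis using same by (auto simp: setloc_def)
  next
    case wr_id
    have mon: "\<forall>k. IdR c k \<noteq> None \<longrightarrow> IdR c' k \<noteq> None" using wr_id by (simp add: setloc_def)
    have "Inv m H (tr@[(i,a)]) c'"
      apply (rule Inv_frame[OF I subset_refl ch _ mon])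
      using sub AS_mono[OF mon] wr_id by (auto simp: setloc_def)
    then show ?thesis by blast
  next
    case (rd1 c1 x)
    have pr1: "\<forall>k<length c1. c1!k \<noteq> None \<longrightarrow> IdR c k \<noteq> None" "length c1 \<le> m"
      using gd[of i] rd1 by auto
    show ?thesis
    proof (cases "length (c1 @ [x]) = m")
      case True
      have key: "\<forall>k<m. (c1@[x])!k \<noteq> None \<longrightarrow> k \<in> AS m c"
        using pr1 rd1 True by (auto simp: AS_def nth_append less_Suc_eq)
      have "Inv m (insert (AS m c) H) (tr@[(i,a)]) c'"
        apply (rule Inv_frame[OF I])
        using sub ch rd1 True key by (auto simp: setloc_def AS_def)
      then show ?thesis by blast
    next
      case False
      have "good m H c' (loc c' i)" using rd1 False pr1
        by (auto simp: setloc_def nth_append less_Suc_eq)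
      then show ?thesis using same rd1 by (auto simp: setloc_def)
    qed
  next
    case (rd2 c1 c2 x)
    obtain X where X: "X \<in> H" "\<forall>k<m. c1!k \<noteq> None \<longrightarrow> k\<in>X" "\<forall>k<length c2. c2!k = None \<longrightarrow> k\<notin>X"
      and l1: "length c1 = m"
      using gd[of i] rd2 by auto
    have XA: "X \<subseteq> AS m c" using sub X(1) by blast
    have X': "\<forall>k<length (c2@[x]). (c2@[x])!k = None \<longrightarrow> k\<notin>X"
      using X(3) XA rd2 by (auto simp: nth_append AS_def less_Suc_eq)
    show ?thesis
    proof (cases "length (c2 @ [x]) = m")
      case True
      show ?thesis
      proof (cases "c1 = c2 @ [x]")
        case True2: True
        have eq: "{j. j < m \<and> c1 ! j \<noteq> None} = X"
          using X(2) X' XA True True2 by (auto simp: AS_def)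
        have "good m H c' (loc c' i)" using rd2 True True2 eq X(1) by (simp add: setloc_def)
        then show ?thesis using same rd2 by (auto simp: setloc_def)
      next
        case False
        have "good m H c' (loc c' i)" using rd2 True False by (simp add: setloc_def)
        then show ?thesis using same rd2 by (auto simp: setloc_def)
      qed
    next
      case False
      have "good m H c' (loc c' i)" using rd2 False X(1,2) X' l1 by (auto simp: setloc_def)
      then show ?thesis using same rd2 by (auto simp: setloc_def)
    qed
  next
    case (wr_set S)
    have "S \<in> H" using gd[of i] wr_set by simp
    then show ?thesis using same wr_set by (auto simp: setloc_def)
  next
    case inv_res
    then show ?thesis using same by (auto simp: setloc_def)
  next
    case (rd_set b ss S)
    then show ?thesis using same by (auto simp: setloc_def)
  next
    case (dec_ok b ss)
    then show ?thesis using same by (auto simp: setloc_def)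
  next
    case (dec_fail b ss)
    then show ?thesis using same by (auto simp: setloc_def return_state_def)
  next
    case (rd_val b k)
    then show ?thesis using same by (auto simp: setloc_def return_state_def)
  qed
qed

theorem lemma6:
  fixes m :: nat and tr :: "(nat \<times> 'v act) list" and c :: "'v conf"
  assumes "execution m tr c"
    and "(i, WrSet Si) \<in> set tr"
    and "(j, WrSet Sj) \<in> set tr"
  shows "Si \<subseteq> Sj \<or> Sj \<subseteq> Si"
proof -
  obtain H where "Inv m H tr c" using inv_exec[OF assms(1)] by blast
  then show ?thesis using assms(2,3) unfolding Inv_def by blast
qed

end
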